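(* Let $(X,\|\cdot\|)$ be a normed linear space over $\mathbb{R}$ or $\mathbb{C}$, let $a\in X\setminus\{0\}$ and $x_1,\dots,x_n\in X\setminus\{0\}$ with $\|a\|\ge\|x_j-a\|$ for each $j\in\{1,\dots,n\}$. Then for any $p_1,\dots,p_n\ge0$ with $\sum_{j=1}^n p_j=1$, $$\frac{\big\|\sum_{j=1}^n p_jx_j\big\|}{\sum_{j=1}^n p_j\|x_j\|}\ \ge\ \frac12\min_{1\le j\le n}\left\{\frac{\|a\|^2-\|a-x_j\|^2}{\|x_j\|\,\|a\|}\right\}\ (\ge 0).$$ The constant $\tfrac12$ is best possible: if $X\neq\{0\}$, there is no constant $E>\tfrac12$ such that the inequality with $\tfrac12$ replaced by $E$ holds for all such $n$, $x_j$, $a$, $p_j$. *)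

theory Defs
  imports "HOL-Analysis.Analysis"
begin

definition dd_hyps :: "'a::real_normed_vector \<Rightarrow> (nat \<Rightarrow> 'a) \<Rightarrow> (nat \<Rightarrow> real) \<Rightarrow> nat \<Rightarrow> bool" where
  "dd_hyps a x p n \<longleftrightarrow> a \<noteq> 0 \<and> (\<forall>j\<in>{1..n}. x j \<noteq> 0 \<and> norm (x j - a) \<le> norm a)
     \<and> (\<forall>j\<in>{1..n}. p j \<ge> 0) \<and> (\<Sum>j=1..n. p j) = 1"

definition dd_min :: "'a::real_normed_vector \<Rightarrow> (nat \<Rightarrow> 'a) \<Rightarrow> nat \<Rightarrow> real" where
  "dd_min a x n = Min ((\<lambda>j. ((norm a)\<^sup>2 - (norm (a - x j))\<^sup>2) / (norm (x j) * norm a)) ` {1..n})"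

definition dd_ineq :: "real \<Rightarrow> 'a::real_normed_vector \<Rightarrow> (nat \<Rightarrow> 'a) \<Rightarrow> (nat \<Rightarrow> real) \<Rightarrow> nat \<Rightarrow> bool" where
  "dd_ineq E a x p n \<longleftrightarrow>
     norm (\<Sum>j=1..n. p j *\<^sub>R x j) / (\<Sum>j=1..n. p j * norm (x j)) \<ge> E * dd_min a x n"

end

theory Submission
  imports Defs
begin

lemma part1:
  fixes a :: "'a::real_normed_vector"
  assumes H: "dd_hyps a x p n"
  shows "dd_ineq (1/2) a x p n \<and> dd_min a x n \<ge> 0"
proof -
  define r where "r j = ((norm a)\<^sup>2 - (norm (a - x j))\<^sup>2) / (norm (x j) * norm a)" for j
  have a0: "a \<noteq> 0" and xh: "\<And>j. j \<in> {1..n} \<Longrightarrow> x j \<noteq> 0 \<and> norm (x j - a) \<le> norm a"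
    and pp: "\<And>j. j \<in> {1..n} \<Longrightarrow> p j \<ge> 0" and ps: "(\<Sum>j=1..n. p j) = 1"
    using H unfolding dd_hyps_def by auto
  have nn: "{1..n} \<noteq> {}" using ps by (cases "n = 0") auto
  have mdef: "dd_min a x n = Min (r ` {1..n})" unfolding dd_min_def r_def by simp
  have na: "norm a > 0" using a0 by simp
  have rpos: "r j \<ge> 0" if "j \<in> {1..n}" for j
  proof -
    have "norm (a - x j) \<le> norm a" using xh[OF that] by (simp add: norm_minus_commute)
    hence "(norm (a - x j))\<^sup>2 \<le> (norm a)\<^sup>2" by (simp add: power_mono)
    thus ?thesis unfolding r_def by simp
  qed
  have m0: "dd_min a x n \<ge> 0"
    unfolding mdef using rpos nn by (subst Min_ge_iff) auto
  define m where "m = dd_min a x n"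
  have mle: "m \<le> r j" if "j \<in> {1..n}" for j unfolding m_def mdef using that by simp
  have step: "norm a - norm (a - x j) \<ge> m/2 * norm (x j)" if j: "j \<in> {1..n}" for j
  proof -
    have xj: "norm (x j) > 0" using xh[OF j] by simp
    have dl: "norm (a - x j) \<le> norm a" using xh[OF j] by (simp add: norm_minus_commute)
    have "m * (norm (x j) * norm a) \<le> (norm a)\<^sup>2 - (norm (a - x j))\<^sup>2"
      using mle[OF j] xj na unfolding r_def by (simp add: pos_le_divide_eq)
    also have "\<dots> = (norm a - norm (a - x j)) * (norm a + norm (a - x j))"
      by (simp add: power2_eq_square algebra_simps)
    also have "\<dots> \<le> (norm a - norm (a - x j)) * (2 * norm a)"
      using dl by (intro mult_left_mono) auto
    finally have "(m/2 * norm (x j)) * (2 * norm a) \<le> (norm a - norm (a - x j)) * (2 * norm a)"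
      by (simp add: algebra_simps)
    thus ?thesis using na by simp
  qed
  have s1: "(\<Sum>j=1..n. p j * (m/2 * norm (x j))) \<le> (\<Sum>j=1..n. p j * (norm a - norm (a - x j)))"
    using step pp by (intro sum_mono mult_left_mono) auto
  have s2: "(\<Sum>j=1..n. p j * (norm a - norm (a - x j))) = norm a - (\<Sum>j=1..n. p j * norm (a - x j))"
    using ps by (simp add: right_diff_distrib sum_subtractf sum_distrib_right[symmetric])
  have s3: "(\<Sum>j=1..n. p j *\<^sub>R (a - x j)) = a - (\<Sum>j=1..n. p j *\<^sub>R x j)"
    using ps by (simp add: scaleR_diff_right sum_subtractf scaleR_sum_left[symmetric])
  have s4: "norm (\<Sum>j=1..n. p j *\<^sub>R (a - x j)) \<le> (\<Sum>j=1..n. p j * norm (a - x j))"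
    using pp by (intro order.trans[OF norm_sum] sum_mono) auto
  have s5: "norm a - norm (a - (\<Sum>j=1..n. p j *\<^sub>R x j)) \<le> norm (\<Sum>j=1..n. p j *\<^sub>R x j)"
    by (metis add_diff_cancel_left' diff_add_cancel norm_triangle_ineq4 le_diff_eq
        norm_minus_commute norm_triangle_ineq2)
  have key: "m/2 * (\<Sum>j=1..n. p j * norm (x j)) \<le> norm (\<Sum>j=1..n. p j *\<^sub>R x j)"
  proof -
    have "m/2 * (\<Sum>j=1..n. p j * norm (x j)) = (\<Sum>j=1..n. p j * (m/2 * norm (x j)))"
      by (simp add: sum_distrib_left algebra_simps)
    moreover have "norm (a - (\<Sum>j=1..n. p j *\<^sub>R x j)) \<le> (\<Sum>j=1..n. p j * norm (a - x j))" using s4 unfolding s3 .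
    ultimately show ?thesis using s1 s2 s5 by linarith
  qed
  have "\<exists>j\<in>{1..n}. p j > 0"
  proof (rule ccontr)
    assume "\<not> ?thesis"
    hence "\<forall>j\<in>{1..n}. p j = 0" using pp by force
    thus False using ps by simp
  qed
  then obtain j where j: "j \<in> {1..n}" "p j > 0" by blast
  have D: "(\<Sum>j=1..n. p j * norm (x j)) > 0"
    using j xh[OF j(1)] pp by (intro sum_pos2[of _ j]) auto
  have "1/2 * m \<le> norm (\<Sum>j=1..n. p j *\<^sub>R x j) / (\<Sum>j=1..n. p j * norm (x j))"
    using key D by (simp add: pos_le_divide_eq)
  thus ?thesis unfolding dd_ineq_def m_def using m0 by simp
qed

lemma part2:
  fixes v :: "'a::real_normed_vector"
  assumes v: "v \<noteq> 0" and E: "E > 1/2"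
  shows "\<not> (\<forall>n (a::'a) x p. dd_hyps a x p n \<longrightarrow> dd_ineq E a x p n)"
proof
  assume A: "\<forall>n (a::'a) x p. dd_hyps a x p n \<longrightarrow> dd_ineq E a x p n"
  define t where "t = 1 - 1/(2*E)"
  have E0: "E > 0" using E by simp
  have t0: "t > 0" "t < 1" using E E0 unfolding t_def by (auto simp: field_simps)
  define x where "x = (\<lambda>j::nat. t *\<^sub>R v)"
  define p where "p = (\<lambda>j::nat. 1::real)"
  have nv: "norm v > 0" using v by simp
  have d: "norm (t *\<^sub>R v - v) = (1 - t) * norm v"
  proof -
    have "t *\<^sub>R v - v = (t - 1) *\<^sub>R v" by (simp add: algebra_simps)
    thus ?thesis using t0 by simp
  qed
  have d2: "norm (v - t *\<^sub>R v) = (1 - t) * norm v"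
    using d by (simp add: norm_minus_commute)
  have "dd_hyps v x p 1" unfolding dd_hyps_def x_def p_def using v t0 d nv by auto
  hence "dd_ineq E v x p 1" using A by blast
  moreover have "dd_min v x 1 = 2 - t"
  proof -
    have "dd_min v x 1 = ((norm v)\<^sup>2 - ((1 - t) * norm v)\<^sup>2) / (t * norm v * norm v)"
      unfolding dd_min_def x_def using d2 t0 by simp
    also have "\<dots> = 2 - t" using nv t0 by (simp add: field_simps power2_eq_square)
    finally show ?thesis .
  qed
  moreover have "norm (t *\<^sub>R v) / (t * norm v) = 1" using t0 nv by simp
  ultimately have "E * (2 - t) \<le> 1" unfolding dd_ineq_def x_def p_def using t0 v by simp
  moreover have "E * (2 - t) = E + 1/2" unfolding t_def using E0 by (simp add: field_simps)
  ultimately show False using E by simp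
qed

theorem theorem2p2:
  shows "(\<forall>n (a::'a::real_normed_vector) x p. dd_hyps a x p n \<longrightarrow>
            dd_ineq (1/2) a x p n \<and> dd_min a x n \<ge> 0)
       \<and> ((\<exists>v::'a. v \<noteq> 0) \<longrightarrow>
            (\<forall>E > 1/2. \<not> (\<forall>n (a::'a) x p. dd_hyps a x p n \<longrightarrow> dd_ineq E a x p n)))"
  using part1 part2 by blast

end
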